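(* Let $z_1,z_2\in\mathbb{C}$ with $\mathrm{Im}(z_i)>0$ and $|z_i|\ge 80(2\pi)^2$, and set $L_i^2=\frac{|z_i|^2}{2\mathrm{Im}(z_i)}$, $A_i^2=\frac{|z_i|^2}{2\mathrm{Re}(z_i)}$. Suppose $$\left|\frac{2\pi}{L_1^2}-\frac{2\pi}{L_2^2}\right|\le16(2\pi)^3\left(\frac{1}{L_1^4}+\frac{1}{L_2^4}\right),\qquad \left|\frac{2\pi}{A_1^2}-\frac{2\pi}{A_2^2}\right|\le20(2\pi)^3\left(\frac{1}{L_1^4}+\frac{1}{L_2^4}\right).$$ Then $|z_1-z_2|<560(2\pi)^2\frac{\mathrm{Im}(z_1)}{|z_1|}$.
   Context: Here $\frac{2\pi}{A_i^2}$ is understood as $\frac{4\pi\,\mathrm{Re}(z_i)}{|z_i|^2}$ (so it is defined also when $\mathrm{Re}(z_i)=0$). *)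

theory Defs
  imports Complex_Main
begin

definition Lsq :: "complex \<Rightarrow> real" where
  "Lsq z = (cmod z)^2 / (2 * Im z)"

text \<open>The quantity 2 pi / A_i^2, read as 4 pi Re z / |z|^2 (defined also when Re z = 0).\<close>
definition twopi_over_Asq :: "complex \<Rightarrow> real" where
  "twopi_over_Asq z = 4 * pi * Re z / (cmod z)^2"

end

theory Submission
  imports Defs
begin

theorem lemma6p2:
  fixes z1 z2 :: complex
  assumes "Im z1 > 0" and "Im z2 > 0"
    and "cmod z1 \<ge> 80 * (2 * pi)^2" and "cmod z2 \<ge> 80 * (2 * pi)^2"
    and "\<bar>2 * pi / Lsq z1 - 2 * pi / Lsq z2\<bar>
           \<le> 16 * (2 * pi)^3 * (1 / (Lsq z1)^2 + 1 / (Lsq z2)^2)"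
    and "\<bar>twopi_over_Asq z1 - twopi_over_Asq z2\<bar>
           \<le> 20 * (2 * pi)^3 * (1 / (Lsq z1)^2 + 1 / (Lsq z2)^2)"
  shows "cmod (z1 - z2) < 560 * (2 * pi)^2 * (Im z1 / cmod z1)"
proof -
  define n1 where "n1 = cmod z1"
  define n2 where "n2 = cmod z2"
  define a1 where "a1 = Im z1 / n1^2"
  define a2 where "a2 = Im z2 / n2^2"
  define r1 where "r1 = Re z1 / n1^2"
  define r2 where "r2 = Re z2 / n2^2"
  have pi: "pi > 0" using pi_gt_zero .
  have n1p: "n1 > 0" proof -
    have "z1 \<noteq> 0" using assms(1) by auto
    thus ?thesis unfolding n1_def by simp
  qed
  have n2p: "n2 > 0" proof -
    have "z2 \<noteq> 0" using assms(2) by auto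
    thus ?thesis unfolding n2_def by simp
  qed
  have a1p: "a1 > 0" using assms(1) n1p a1_def by simp
  have a2p: "a2 > 0" using assms(2) n2p a2_def by simp
  have i1: "Im z1 \<le> n1" using abs_Im_le_cmod[of z1] n1_def by simp
  have i2: "Im z2 \<le> n2" using abs_Im_le_cmod[of z2] n2_def by simp
  have a1n: "a1 * n1 \<le> 1" using i1 n1p unfolding a1_def by (simp add: power2_eq_square field_simps)
  have a2n: "a2 * n2 \<le> 1" using i2 n2p unfolding a2_def by (simp add: power2_eq_square field_simps)
  have L1: "2*pi / Lsq z1 = 4*pi*a1" "1 / (Lsq z1)^2 = 4*a1^2"
    unfolding Lsq_def a1_def n1_def[symmetric] using n1p assms(1)
    by (simp_all add: field_simps power2_eq_square)
  have L2: "2*pi / Lsq z2 = 4*pi*a2" "1 / (Lsq z2)^2 = 4*a2^2"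
    unfolding Lsq_def a2_def n2_def[symmetric] using n2p assms(2)
    by (simp_all add: field_simps power2_eq_square)
  have T1: "twopi_over_Asq z1 = 4*pi*r1" unfolding twopi_over_Asq_def r1_def n1_def by simp
  have T2: "twopi_over_Asq z2 = 4*pi*r2" unfolding twopi_over_Asq_def r2_def n2_def by simp
  have h1: "4*pi*\<bar>a1 - a2\<bar> \<le> 4*pi*(128*pi^2*(a1^2+a2^2))"
  proof -
    have "\<bar>4*pi*a1 - 4*pi*a2\<bar> \<le> 16*(2*pi)^3*(4*a1^2+4*a2^2)" using assms(5) L1 L2 by simp
    moreover have "\<bar>4*pi*a1 - 4*pi*a2\<bar> = 4*pi*\<bar>a1 - a2\<bar>"
      by (metis abs_mult abs_of_pos mult_pos_pos pi_gt_zero right_diff_distrib zero_less_numeral)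
    ultimately show ?thesis by (simp add: power3_eq_cube power2_eq_square algebra_simps)
  qed
  have h1': "\<bar>a1 - a2\<bar> \<le> 128*pi^2*(a1^2+a2^2)" using h1 pi by simp
  have h2: "4*pi*\<bar>r1 - r2\<bar> \<le> 4*pi*(160*pi^2*(a1^2+a2^2))"
  proof -
    have "\<bar>4*pi*r1 - 4*pi*r2\<bar> \<le> 20*(2*pi)^3*(4*a1^2+4*a2^2)" using assms(6) L1 L2 T1 T2 by simp
    moreover have "\<bar>4*pi*r1 - 4*pi*r2\<bar> = 4*pi*\<bar>r1 - r2\<bar>"
      by (metis abs_mult abs_of_pos mult_pos_pos pi_gt_zero right_diff_distrib zero_less_numeral)
    ultimately show ?thesis by (simp add: power3_eq_cube power2_eq_square algebra_simps)
  qed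
  have h2': "\<bar>r1 - r2\<bar> \<le> 160*pi^2*(a1^2+a2^2)" using h2 pi by simp
  have c1: "128*pi^2*a1 \<le> 2/5"
  proof -
    have "a1 * (320*pi^2) \<le> a1 * n1" using assms(3) a1p n1_def by (simp add: power2_eq_square)
    with a1n have "a1 * (320*pi^2) \<le> 1" by linarith
    thus ?thesis by (simp add: algebra_simps)
  qed
  have c2: "128*pi^2*a2 \<le> 2/5"
  proof -
    have "a2 * (320*pi^2) \<le> a2 * n2" using assms(4) a2p n2_def by (simp add: power2_eq_square)
    with a2n have "a2 * (320*pi^2) \<le> 1" by linarith
    thus ?thesis by (simp add: algebra_simps)
  qed
  have s1: "128*pi^2*a1^2 \<le> 2/5*a1" using mult_right_mono[OF c1, of a1] a1p by (simp add: power2_eq_square algebra_simps)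
  have s2: "128*pi^2*a2^2 \<le> 2/5*a2" using mult_right_mono[OF c2, of a2] a2p by (simp add: power2_eq_square algebra_simps)
  have ab: "\<bar>a1 - a2\<bar> \<le> 2/5*(a1+a2)" using h1' s1 s2 by (simp add: algebra_simps)
  have r12: "3*a1 \<le> 7*a2" "3*a2 \<le> 7*a1" using ab abs_le_iff[of "a1-a2" "2/5*(a1+a2)"] by auto
  have q1: "3*a1^2 \<le> 7*a1*a2" using mult_left_mono[OF r12(1), of a1] a1p by (simp add: power2_eq_square algebra_simps)
  have q2: "3*a2^2 \<le> 7*a1*a2" using mult_left_mono[OF r12(2), of a2] a2p by (simp add: power2_eq_square algebra_simps)
  have sq: "3*(a1^2+a2^2) \<le> 14*a1*a2" using q1 q2 by simp
  have u1: "1/z1 = Complex r1 (-a1)" using n1p unfolding r1_def a1_def n1_def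
    by (simp add: complex_eq_iff divide_complex_def cmod_power2)
  have u2: "1/z2 = Complex r2 (-a2)" using n2p unfolding r2_def a2_def n2_def
    by (simp add: complex_eq_iff divide_complex_def cmod_power2)
  have du: "cmod (1/z2 - 1/z1) \<le> \<bar>r1 - r2\<bar> + \<bar>a1 - a2\<bar>"
  proof -
    have "cmod (1/z2 - 1/z1) \<le> \<bar>Re (1/z2 - 1/z1)\<bar> + \<bar>Im (1/z2 - 1/z1)\<bar>" by (rule cmod_le)
    also have "\<dots> = \<bar>r1 - r2\<bar> + \<bar>a1 - a2\<bar>" using u1 u2 by (simp add: abs_minus_commute)
    finally show ?thesis .
  qed
  have du2: "cmod (1/z2 - 1/z1) \<le> 288*pi^2*(a1^2+a2^2)" using du h1' h2' by simp
  have du3: "cmod (1/z2 - 1/z1) \<le> 1344*pi^2*a1*a2"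
  proof -
    have "288*pi^2*(a1^2+a2^2) \<le> 288*pi^2*(14/3*a1*a2)" using sq by (intro mult_left_mono) auto
    also have "\<dots> = 1344*pi^2*a1*a2" by simp
    finally show ?thesis using du2 by linarith
  qed
  have z1nz: "z1 \<noteq> 0" and z2nz: "z2 \<noteq> 0" using n1p n2p n1_def n2_def by auto
  have eq: "z1 - z2 = z1 * z2 * (1/z2 - 1/z1)" using z1nz z2nz by (simp add: field_simps)
  have "cmod (z1 - z2) = n1 * n2 * cmod (1/z2 - 1/z1)" unfolding eq n1_def n2_def by (simp add: norm_mult)
  also have "\<dots> \<le> n1 * n2 * (1344*pi^2*a1*a2)" using du3 n1p n2p by (intro mult_left_mono) auto
  also have "\<dots> = 1344*pi^2*(a1*n1)*(a2*n2)" by simp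
  also have "\<dots> \<le> 1344*pi^2*(a1*n1)" using a2n a1p n1p by (simp add: mult_left_le)
  also have "\<dots> < 2240*pi^2*(a1*n1)" using a1p n1p pi by simp
  also have "\<dots> = 560 * (2 * pi)^2 * (Im z1 / cmod z1)" unfolding a1_def n1_def[symmetric] using n1p
    by (simp add: power2_eq_square field_simps)
  finally show ?thesis .
qed

end
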